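(* Let $n\ge1$ and let $f\colon S^1\to\mathbb{R}$ be a smooth function having at least $2n$ local extrema, all of whose critical points are non-degenerate. Then for almost every $v=(x,y,z)\in\mathbb{S}^2\subset\mathbb{R}^3$ with $y^2-4xz>0$, the function $$h_v(t)=x f(t)+y f'(t)+z f''(t)$$ has at least $n$ local maxima on $S^1$.
   Context: $\mathbb{S}^2=\{(x,y,z)\in\mathbb{R}^3: x^2+y^2+z^2=1\}$ with its standard area measure; "almost every" refers to this measure. *)

theory Defs
  imports "HOL-Analysis.Analysis"
begin

definition sphere2 :: "(real \<times> real \<times> real) set" where
  "sphere2 = {(x, y, z). x\<^sup>2 + y\<^sup>2 + z\<^sup>2 = 1}"

text \<open>The standard area measure
  on S^2 satisfies sigma(E) = 3 * lambda(cone E) (lambda = Lebesgue measure on R^3),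
  so E is sigma-null iff its cone is Lebesgue-null.\<close>
definition sphere_cone :: "(real \<times> real \<times> real) set \<Rightarrow> (real \<times> real \<times> real) set" where
  "sphere_cone E = {r *\<^sub>R v | r v. 0 < r \<and> r \<le> 1 \<and> v \<in> E}"

definition ae_sphere2 :: "((real \<times> real \<times> real) \<Rightarrow> bool) \<Rightarrow> bool" where
  "ae_sphere2 P \<longleftrightarrow> sphere_cone {v \<in> sphere2. \<not> P v} \<in> null_sets lebesgue"

text \<open>Local maxima / minima of a real function (functions on S^1 are 2pi-periodic
  functions on R; local extrema on S^1 are those in [0, 2pi)).\<close>
definition is_local_max :: "(real \<Rightarrow> real) \<Rightarrow> real \<Rightarrow> bool" where
  "is_local_max g t \<longleftrightarrow> (\<exists>e>0. \<forall>s. \<bar>s - t\<bar> < e \<longrightarrow> g s \<le> g t)"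

definition is_local_min :: "(real \<Rightarrow> real) \<Rightarrow> real \<Rightarrow> bool" where
  "is_local_min g t \<longleftrightarrow> (\<exists>e>0. \<forall>s. \<bar>s - t\<bar> < e \<longrightarrow> g t \<le> g s)"

definition is_local_extremum :: "(real \<Rightarrow> real) \<Rightarrow> real \<Rightarrow> bool" where
  "is_local_extremum g t \<longleftrightarrow> is_local_max g t \<or> is_local_min g t"

definition at_least :: "nat \<Rightarrow> 'a set \<Rightarrow> bool" where
  "at_least m A \<longleftrightarrow> (\<exists>B \<subseteq> A. finite B \<and> card B = m)"

definition smooth_real :: "(real \<Rightarrow> real) \<Rightarrow> bool" where
  "smooth_real f \<longleftrightarrow> (\<forall>k x. ((deriv ^^ k) f) differentiable (at x))"

end

theory Submission
  imports Defs
begin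


definition alt :: "(real \<Rightarrow> real) \<Rightarrow> nat \<Rightarrow> bool" where
  "alt g m \<longleftrightarrow> (\<exists>p \<sigma>. (\<forall>i<2*m. p i < p (Suc i)) \<and> p (2*m) = p 0 + 2*pi \<and>
      (\<forall>i\<le>2*m. \<sigma> * (-1)^i * g (p i) > 0))"

lemma alt_scale:
  assumes "alt g m" "c \<noteq> 0" "\<forall>t. G t = c * g t"
  shows "alt G m"
proof -
  obtain p \<sigma> where p: "\<forall>i<2*m. p i < p (Suc i)" "p (2*m) = p 0 + 2*pi"
     "\<forall>i\<le>2*m. \<sigma> * (-1)^i * g (p i) > 0" using assms(1) unfolding alt_def by blast
  have "(\<sigma>/c) * (-1)^i * G (p i) = \<sigma> * (-1)^i * g (p i)" for i
    using assms(2,3) by simp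
  then have "\<forall>i\<le>2*m. (\<sigma>/c) * (-1)^i * G (p i) > 0"
    using p(3) by presburger
  then show ?thesis unfolding alt_def using p(1,2) by blast
qed

lemma alt_pos: "alt g m \<Longrightarrow> m \<ge> 1"
  unfolding alt_def by (cases m) auto

lemma alt_step:
  assumes "alt g m" "\<forall>t. (g has_real_derivative g' t) (at t)"
    "\<forall>t. g (t + 2*pi) = g t" "\<forall>t. g' (t + 2*pi) = g' t"
    "\<forall>t. G t = g' t - a * g t"
  shows "alt G m"
proof -
  obtain p \<sigma> where p: "\<forall>i<2*m. p i < p (Suc i)" "p (2*m) = p 0 + 2*pi"
     "\<forall>i\<le>2*m. \<sigma> * (-1)^i * g (p i) > 0" using assms(1) unfolding alt_def by blast
  have m1: "m \<ge> 1" using alt_pos assms(1) by blast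
  define k where "k t = exp (-a*t) * g t" for t
  have kd: "(k has_real_derivative exp (-a*t) * G t) (at t)" for t
  proof -
    have "(k has_real_derivative exp (-a*t) * (-a) * g t + exp (-a*t) * g' t) (at t)"
      unfolding k_def
      by (auto intro!: derivative_eq_intros assms(2)[rule_format])
    moreover have "exp (-a*t) * (-a) * g t + exp (-a*t) * g' t = exp (-a*t) * G t"
      by (simp add: assms(5) algebra_simps)
    ultimately show ?thesis by simp
  qed
  have "\<exists>w. i < 2*m \<longrightarrow> (p i < w \<and> w < p (Suc i) \<and> \<sigma> * (-1)^(Suc i) * G w > 0)" for i
  proof (cases "i < 2*m")
    case True
    obtain w where w: "p i < w" "w < p (Suc i)"
      "k (p (Suc i)) - k (p i) = (p (Suc i) - p i) * (exp (-a*w) * G w)"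
      using MVT2[OF p(1)[rule_format, OF True], of k "\<lambda>t. exp (-a*t) * G t"] kd by blast
    have a1: "\<sigma> * (-1)^i * g (p i) > 0" using p(3) True by simp
    have a2: "\<sigma> * (-1)^(Suc i) * g (p (Suc i)) > 0" using p(3) True Suc_leI by blast
    have e1: "\<sigma> * (-1)^(Suc i) * k (p i) = - (exp (-a * p i) * (\<sigma> * (-1)^i * g (p i)))"
      unfolding k_def by (simp add: algebra_simps)
    have e2: "\<sigma> * (-1)^(Suc i) * k (p (Suc i)) = exp (-a * p (Suc i)) * (\<sigma> * (-1)^(Suc i) * g (p (Suc i)))"
      unfolding k_def by (simp add: algebra_simps)
    have b1: "\<sigma> * (-1)^(Suc i) * k (p i) < 0" unfolding e1 using a1 by (simp add: mult_pos_pos)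
    have b2: "\<sigma> * (-1)^(Suc i) * k (p (Suc i)) > 0" unfolding e2 using a2 by (simp only: mult_pos_pos exp_gt_zero)
    have "\<sigma> * (-1)^(Suc i) * (k (p (Suc i)) - k (p i)) > 0" using b1 b2 by (simp add: algebra_simps)
    then have "(p (Suc i) - p i) * exp (-a*w) * (\<sigma> * (-1)^(Suc i) * G w) > 0"
      using w(3) by (simp add: algebra_simps)
    moreover have "(p (Suc i) - p i) * exp (-a*w) > 0" using w by simp
    ultimately have "\<sigma> * (-1)^(Suc i) * G w > 0"
      by (metis mult_pos_pos zero_less_mult_pos mult.assoc)
    then show ?thesis using w by blast
  qed simp
  then obtain w where w: "\<And>i. i < 2*m \<Longrightarrow> p i < w i \<and> w i < p (Suc i) \<and> \<sigma> * (-1)^(Suc i) * G (w i) > 0"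
    by metis
  define q where "q i = (if i < 2*m then w i else w 0 + 2*pi)" for i
  have Gper: "G (t + 2*pi) = G t" for t using assms(3,4,5) by simp
  have "\<forall>i<2*m. q i < q (Suc i)"
  proof (intro allI impI)
    fix i assume i: "i < 2*m"
    show "q i < q (Suc i)"
    proof (cases "Suc i < 2*m")
      case True then show ?thesis using w[of i] w[of "Suc i"] i unfolding q_def by force
    next
      case False
      then have "Suc i = 2*m" using i by simp
      then show ?thesis using w[of i] w[of 0] i p(2) m1 unfolding q_def by force
    qed
  qed
  moreover have "q (2*m) = q 0 + 2*pi" unfolding q_def using m1 by simp
  moreover have "\<forall>i\<le>2*m. (-\<sigma>) * (-1)^i * G (q i) > 0"
  proof (intro allI impI)
    fix i assume i: "i \<le> 2*m"
    show "(-\<sigma>) * (-1)^i * G (q i) > 0"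
    proof (cases "i < 2*m")
      case True then show ?thesis using w[of i] unfolding q_def by simp
    next
      case False
      then have "i = 2*m" using i by simp
      then show ?thesis using w[of 0] m1 Gper unfolding q_def by simp
    qed
  qed
  ultimately show ?thesis unfolding alt_def by blast
qed



lemma per_int:
  assumes "\<forall>t. H (t + 2*pi) = H t"
  shows "H (t + 2*pi* of_int k) = H t"
proof -
  have nat: "H (s + 2*pi* of_nat j) = H s" for s j
  proof (induction j)
    case 0 then show ?case by simp
  next
    case (Suc j)
    have "H (s + 2*pi * of_nat (Suc j)) = H ((s + 2*pi * of_nat j) + 2*pi)"
      by (simp add: algebra_simps)
    also have "\<dots> = H s" using assms Suc by simp
    finally show ?case .
  qed
  show ?thesis
  proof (cases "k \<ge> 0")
    case True then show ?thesis using nat[of t "nat k"] by simp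
  next
    case False
    then have "H (t + 2*pi* of_int k) = H (t + 2*pi* of_int k + 2*pi* of_nat (nat (-k)))"
      using nat[of "t + 2*pi * of_int k" "nat (-k)"] by simp
    also have "\<dots> = H t" using False by simp
    finally show ?thesis .
  qed
qed

lemma interior_max:
  assumes "a < b" "\<forall>t. (H has_real_derivative H' t) (at t)" "H' a > 0" "H' b < 0"
  shows "\<exists>c. a < c \<and> c < b \<and> is_local_max H c"
proof -
  have cont: "continuous_on {a..b} H"
    using assms(2) by (meson DERIV_continuous continuous_at_imp_continuous_on)
  obtain c where c: "a \<le> c" "c \<le> b" "\<forall>t\<in>{a..b}. H t \<le> H c"
    using continuous_attains_sup[OF compact_Icc _ cont] assms(1) by fastforce
  obtain d1 where d1: "d1 > 0" "\<forall>h>0. h < d1 \<longrightarrow> H a < H (a + h)"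
    using DERIV_pos_inc_right[OF assms(2)[rule_format] assms(3)] by blast
  obtain d2 where d2: "d2 > 0" "\<forall>h>0. h < d2 \<longrightarrow> H b < H (b - h)"
    using DERIV_neg_dec_left[OF assms(2)[rule_format] assms(4)] by blast
  have "c \<noteq> a"
  proof
    assume "c = a"
    define h where "h = min (d1/2) (b - a)"
    have "H a < H (a + h)" using d1 assms(1) unfolding h_def by auto
    moreover have "H (a + h) \<le> H c" using c(3) assms(1) d1 unfolding h_def by auto
    ultimately show False using \<open>c = a\<close> by simp
  qed
  moreover have "c \<noteq> b"
  proof
    assume "c = b"
    define h where "h = min (d2/2) (b - a)"
    have "H b < H (b - h)" using d2 assms(1) unfolding h_def by auto
    moreover have "H (b - h) \<le> H c" using c(3) assms(1) d2 unfolding h_def by auto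
    ultimately show False using \<open>c = b\<close> by simp
  qed
  ultimately have ac: "a < c" "c < b" using c by auto
  have "is_local_max H c"
    unfolding is_local_max_def
    by (rule exI[of _ "min (c - a) (b - c)"]) (use ac c(3) in \<open>force simp: abs_less_iff\<close>)
  then show ?thesis using ac by blast
qed

definition red :: "real \<Rightarrow> real" where
  "red t = t - 2*pi* of_int \<lfloor>t/(2*pi)\<rfloor>"

lemma red_range: "red t \<in> {0..<2*pi}"
proof -
  have A: "of_int \<lfloor>t/(2*pi)\<rfloor> \<le> t/(2*pi)" "t/(2*pi) < of_int \<lfloor>t/(2*pi)\<rfloor> + 1"
    by linarith+
  have "2*pi* of_int \<lfloor>t/(2*pi)\<rfloor> \<le> t" using A(1) pi_gt_zero by (simp add: le_divide_eq mult.commute)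
  moreover have "t < 2*pi* of_int \<lfloor>t/(2*pi)\<rfloor> + 2*pi" using A(2) pi_gt_zero by (simp add: divide_less_eq algebra_simps)
  ultimately have "2*pi* of_int \<lfloor>t/(2*pi)\<rfloor> \<le> t" "t < 2*pi* of_int \<lfloor>t/(2*pi)\<rfloor> + 2*pi" by auto
  then show ?thesis unfolding red_def by auto
qed

lemma red_inj:
  assumes "u < s" "s < u + 2*pi" "u < s'" "s' < u + 2*pi" "red s = red s'"
  shows "s = s'"
proof -
  have "s - s' = 2*pi* of_int (\<lfloor>s/(2*pi)\<rfloor> - \<lfloor>s'/(2*pi)\<rfloor>)"
    using assms(5) unfolding red_def by (simp add: algebra_simps)
  moreover have "\<bar>s - s'\<bar> < 2*pi" using assms by auto
  ultimately have "\<bar>of_int (\<lfloor>s/(2*pi)\<rfloor> - \<lfloor>s'/(2*pi)\<rfloor>)::real\<bar> < 1"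
    using pi_gt_zero by (simp add: abs_mult)
  then have "\<lfloor>s/(2*pi)\<rfloor> - \<lfloor>s'/(2*pi)\<rfloor> = 0" by linarith
  then show ?thesis using \<open>s - s' = _\<close> by simp
qed

lemma red_max:
  assumes "\<forall>t. H (t + 2*pi) = H t" "is_local_max H c"
  shows "is_local_max H (red c)"
proof -
  obtain e where e: "e > 0" "\<forall>s. \<bar>s - c\<bar> < e \<longrightarrow> H s \<le> H c" using assms(2) unfolding is_local_max_def by blast
  define k where "k = - \<lfloor>c/(2*pi)\<rfloor>"
  have r: "red c = c + 2*pi* of_int k" unfolding red_def k_def by simp
  have "\<forall>s. \<bar>s - red c\<bar> < e \<longrightarrow> H s \<le> H (red c)"
  proof (intro allI impI)
    fix s assume "\<bar>s - red c\<bar> < e"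
    then have "\<bar>(s - 2*pi* of_int k) - c\<bar> < e" unfolding r by simp
    then have "H (s - 2*pi* of_int k) \<le> H c" using e by blast
    moreover have "H (s - 2*pi* of_int k) = H s"
      using per_int[OF assms(1), of s "-k"] by simp
    moreover have "H (red c) = H c" unfolding r using per_int[OF assms(1)] by simp
    ultimately show "H s \<le> H (red c)" by simp
  qed
  then show ?thesis unfolding is_local_max_def using e by blast
qed

lemma alt_final:
  assumes "alt H' m" "\<forall>t. (H has_real_derivative H' t) (at t)" "\<forall>t. H (t + 2*pi) = H t"
  shows "at_least m {t \<in> {0..<2*pi}. is_local_max H t}"
proof -
  obtain p \<sigma> where p: "\<forall>i<2*m. p i < p (Suc i)" "p (2*m) = p 0 + 2*pi"
     "\<forall>i\<le>2*m. \<sigma> * (-1)^i * H' (p i) > 0" using assms(1) unfolding alt_def by blast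
  have mono: "p i < p j" if "i < j" "j \<le> 2*m" for i j
    using that
  proof (induction j)
    case 0 then show ?case by simp
  next
    case (Suc j)
    then show ?case using p(1) by (cases "i = j") (auto intro: less_trans)
  qed
  define off where "off = (if \<sigma> > 0 then 0 else (1::nat))"
  have "\<exists>c. j < m \<longrightarrow> p (2*j + off) < c \<and> c < p (2*j + off+1) \<and> is_local_max H c" for j
  proof (cases "j < m")
    case True
    have le: "2*j + off+1 \<le> 2*m" "2*j + off \<le> 2*m" using True unfolding off_def by auto
    have s1: "\<sigma> * (-1)^(2*j + off) * H' (p (2*j + off)) > 0" using p(3) le by blast
    have s2: "\<sigma> * (-1)^(2*j + off+1) * H' (p (2*j + off+1)) > 0" using p(3) le by blast
    have "H' (p (2*j + off)) > 0 \<and> H' (p (2*j + off+1)) < 0"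
    proof (cases "\<sigma> > 0")
      case True
      then show ?thesis using s1 s2 unfolding off_def by (simp add: zero_less_mult_iff mult_less_0_iff)
    next
      case False
      then show ?thesis using s1 s2 unfolding off_def by (simp add: zero_less_mult_iff mult_less_0_iff)
    qed
    moreover have "p (2*j + off) < p (2*j + off+1)" using p(1) True unfolding off_def by auto
    ultimately show ?thesis using interior_max[OF _ assms(2)] by blast
  qed simp
  then obtain c where c: "\<And>j. j < m \<Longrightarrow> p (2*j + off) < c j \<and> c j < p (2*j + off+1) \<and> is_local_max H (c j)"
    by metis
  have off1: "off \<le> 1" unfolding off_def by simp
  have crange: "p 0 < c j \<and> c j < p 0 + 2*pi" if "j < m" for j
  proof -
    have "p 0 \<le> p (2*j + off)" using mono[of 0 "2*j + off"] that off1 by (cases "2*j + off = 0") auto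
    moreover have "p (2*j + off+1) \<le> p (2*m)" using mono[of "2*j + off+1" "2*m"] that off1
      by (cases "2*j + off+1 = 2*m") auto
    ultimately show ?thesis using c[OF that] p(2) by auto
  qed
  have cmono: "c i < c j" if "i < j" "j < m" for i j
  proof -
    have "2*i + off+1 < 2*j + off" "2*j + off \<le> 2*m" using that off1 by auto
    then have "p (2*i + off+1) \<le> p (2*j + off)" using mono[of "2*i + off+1" "2*j + off"] by auto
    then show ?thesis using c[of i] c[of j] that by auto
  qed
  have inj: "inj_on (\<lambda>j. red (c j)) {..<m}"
  proof (rule inj_onI)
    fix i j assume ij: "i \<in> {..<m}" "j \<in> {..<m}" "red (c i) = red (c j)"
    then have "c i = c j" using red_inj[of "p 0" "c i" "c j"] crange by auto
    then show "i = j" using cmono ij(1,2) by (metis lessThan_iff less_irrefl linorder_neqE_nat)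
  qed
  have "(\<lambda>j. red (c j)) ` {..<m} \<subseteq> {t \<in> {0..<2*pi}. is_local_max H t}"
    using red_range red_max[OF assms(3)] c by auto
  moreover have "card ((\<lambda>j. red (c j)) ` {..<m}) = m" using card_image[OF inj] by simp
  ultimately show ?thesis unfolding at_least_def by blast
qed



lemma sign_change_pos:
  assumes "a < z" "z < b" "\<forall>t. (g has_real_derivative g' t) (at t)" "g z = 0" "g' z > 0"
    "\<forall>t. a \<le> t \<and> t \<le> b \<and> t \<noteq> z \<longrightarrow> g t \<noteq> 0"
  shows "g a < 0 \<and> g b > 0"
proof -
  have cont: "continuous_on S g" for S
    using assms(3) by (meson DERIV_continuous continuous_at_imp_continuous_on)
  obtain d1 where d1: "d1 > 0" "\<forall>h>0. h < d1 \<longrightarrow> g z < g (z + h)"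
    using DERIV_pos_inc_right[OF assms(3)[rule_format] assms(5)] by blast
  obtain d2 where d2: "d2 > 0" "\<forall>h>0. h < d2 \<longrightarrow> g (z - h) < g z"
    using DERIV_pos_inc_left[OF assms(3)[rule_format] assms(5)] by blast
  have "g b > 0"
  proof (rule ccontr)
    assume "\<not> g b > 0"
    then have gb: "g b \<le> 0" by simp
    define h where "h = min (d1/2) ((b - z)/2)"
    have h: "h > 0" "h < d1" "z + h \<le> b" using d1 assms(2) unfolding h_def by (auto simp: min_def field_simps)
    have "g (z + h) > 0" using d1 h assms(4) by auto
    then obtain x where "z + h \<le> x" "x \<le> b" "g x = 0"
      using IVT2'[of g b 0 "z + h", OF gb _ h(3) cont] by auto
    then show False using assms(1,6) h(1) by force
  qed
  moreover have "g a < 0"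
  proof (rule ccontr)
    assume "\<not> g a < 0"
    then have ga: "0 \<le> g a" by simp
    define h where "h = min (d2/2) ((z - a)/2)"
    have h: "h > 0" "h < d2" "a \<le> z - h" using d2 assms(1) unfolding h_def by (auto simp: min_def field_simps)
    have "g (z - h) < 0" using d2 h assms(4) by auto
    then obtain x where "a \<le> x" "x \<le> z - h" "g x = 0"
      using IVT2'[of g "z - h" 0 a, OF _ ga h(3) cont] by auto
    then show False using assms(2,6) h(1) by force
  qed
  ultimately show ?thesis by simp
qed

lemma sign_change:
  assumes "a < z" "z < b" "\<forall>t. (g has_real_derivative g' t) (at t)" "g z = 0" "g' z \<noteq> 0"
    "\<forall>t. a \<le> t \<and> t \<le> b \<and> t \<noteq> z \<longrightarrow> g t \<noteq> 0"
  shows "g a * g b < 0"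
proof (cases "g' z > 0")
  case True
  then show ?thesis using sign_change_pos[OF assms(1-4) True assms(6)] by (simp add: mult_neg_pos)
next
  case False
  then have "- g' z > 0" using assms(5) by simp
  moreover have "\<forall>t. ((\<lambda>t. - g t) has_real_derivative - g' t) (at t)"
    using assms(3) by (auto intro: DERIV_minus)
  ultimately have "- g a < 0 \<and> - g b > 0"
    using sign_change_pos[of a z b "\<lambda>t. - g t" "\<lambda>t. - g' t"] assms by auto
  then show ?thesis by (simp add: mult_pos_neg)
qed

lemma isolated_zero:
  assumes "(g has_real_derivative l) (at z)" "g z = 0" "l \<noteq> 0"
  shows "\<exists>d>0. \<forall>t. t \<noteq> z \<and> \<bar>t - z\<bar> < d \<longrightarrow> g t \<noteq> 0"
proof (cases "l > 0")
  case True
  obtain d1 where d1: "d1 > 0" "\<forall>h>0. h < d1 \<longrightarrow> g z < g (z + h)"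
    using DERIV_pos_inc_right[OF assms(1) True] by blast
  obtain d2 where d2: "d2 > 0" "\<forall>h>0. h < d2 \<longrightarrow> g (z - h) < g z"
    using DERIV_pos_inc_left[OF assms(1) True] by blast
  have "\<forall>t. t \<noteq> z \<and> \<bar>t - z\<bar> < min d1 d2 \<longrightarrow> g t \<noteq> 0"
  proof (intro allI impI)
    fix t assume t: "t \<noteq> z \<and> \<bar>t - z\<bar> < min d1 d2"
    show "g t \<noteq> 0"
    proof (cases "t > z")
      case True then show ?thesis using d1(2)[rule_format, of "t - z"] t assms(2) by auto
    next
      case False then show ?thesis using d2(2)[rule_format, of "z - t"] t assms(2) by auto
    qed
  qed
  then show ?thesis using d1 d2 by (meson min_less_iff_conj)
next
  case False
  then have l: "l < 0" using assms(3) by simp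
  obtain d1 where d1: "d1 > 0" "\<forall>h>0. h < d1 \<longrightarrow> g z > g (z + h)"
    using DERIV_neg_dec_right[OF assms(1) l] by blast
  obtain d2 where d2: "d2 > 0" "\<forall>h>0. h < d2 \<longrightarrow> g (z - h) > g z"
    using DERIV_neg_dec_left[OF assms(1) l] by blast
  have "\<forall>t. t \<noteq> z \<and> \<bar>t - z\<bar> < min d1 d2 \<longrightarrow> g t \<noteq> 0"
  proof (intro allI impI)
    fix t assume t: "t \<noteq> z \<and> \<bar>t - z\<bar> < min d1 d2"
    show "g t \<noteq> 0"
    proof (cases "t > z")
      case True then show ?thesis using d1(2)[rule_format, of "t - z"] t assms(2) by auto
    next
      case False then show ?thesis using d2(2)[rule_format, of "z - t"] t assms(2) by auto
    qed
  qed
  then show ?thesis using d1 d2 by (meson min_less_iff_conj)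
qed

lemma zeros_finite:
  assumes "\<forall>t. (g has_real_derivative g' t) (at t)" "\<forall>t. g t = 0 \<longrightarrow> g' t \<noteq> 0"
  shows "finite {t \<in> {0..<2*pi}. g t = 0}"
proof -
  have cont: "continuous_on UNIV g"
    using assms(1) by (meson DERIV_continuous continuous_at_imp_continuous_on)
  have cl: "closed {t. g t = 0}" using closed_Collect_eq[OF cont continuous_on_const] by simp
  have "\<not> z islimpt {t. g t = 0}" for z
  proof
    assume lz: "z islimpt {t. g t = 0}"
    then have "g z = 0" using cl closed_limpt by blast
    then obtain d where d: "d > 0" "\<forall>t. t \<noteq> z \<and> \<bar>t - z\<bar> < d \<longrightarrow> g t \<noteq> 0"
      using isolated_zero[OF assms(1)[rule_format] _ assms(2)[rule_format]] by blast
    then show False using lz unfolding islimpt_approachable dist_real_def by force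
  qed
  then have "finite ({0..2*pi} \<inter> {t. g t = 0})"
    by (intro finite_not_islimpt_in_compact) auto
  then show ?thesis by (rule finite_subset[rotated]) auto
qed



lemma sgn_helper:
  fixes x y z :: real
  assumes "x * y > 0" "y * z < 0" shows "x * z < 0"
  using assms by (auto simp: zero_less_mult_iff mult_less_0_iff)

lemma alt_init:
  assumes d: "\<forall>t. (g has_real_derivative g' t) (at t)" and per: "\<forall>t. g (t + 2*pi) = g t"
    and nd: "\<forall>t. g t = 0 \<longrightarrow> g' t \<noteq> 0"
    and cardZ: "card {t \<in> {0..<2*pi}. g t = 0} \<ge> 2*n" and n1: "n \<ge> 1"
  shows "\<exists>m\<ge>n. alt g m"
proof -
  define Z where "Z = {t \<in> {0..<2*pi}. g t = 0}"
  have finZ: "finite Z" unfolding Z_def using zeros_finite[OF d nd] .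
  define xs where "xs = sorted_list_of_set Z"
  have xs: "sorted_wrt (<) xs" "set xs = Z" "length xs = card Z"
    unfolding xs_def using finZ by auto
  define K where "K = card Z"
  have K2: "K \<ge> 2" using cardZ n1 unfolding K_def Z_def by simp
  have lt: "xs!i < xs!j" if "i < j" "j < K" for i j
    using sorted_wrt_nth_less[OF xs(1) that(1)] that xs(3) K_def by simp
  have le: "xs!i \<le> xs!j" if "i \<le> j" "j < K" for i j
    using lt[of i j] that by (cases "i = j") auto
  have inZ: "xs!i \<in> Z" if "i < K" for i using that xs(2,3) K_def nth_mem by metis
  have allZ: "\<exists>i<K. xs!i = t" if "t \<in> Z" for t
    using that xs(2,3) K_def by (metis in_set_conv_nth)
  have Zprop: "0 \<le> t \<and> t < 2*pi \<and> g t = 0" if "t \<in> Z" for t using that unfolding Z_def by auto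
  define zz where "zz i = (if i < K then xs!i else xs!0 + 2*pi)" for i
  have zzK: "zz K = zz 0 + 2*pi" unfolding zz_def using K2 by simp
  have zz0: "g (zz i) = 0" if "i \<le> K" for i
  proof (cases "i < K")
    case True then show ?thesis unfolding zz_def using inZ Zprop by auto
  next
    case False then show ?thesis unfolding zz_def using inZ[of 0] Zprop K2 per by auto
  qed
  have zzmono: "zz i < zz (Suc i)" if "i < K" for i
  proof (cases "Suc i < K")
    case True then show ?thesis unfolding zz_def using lt[of i "Suc i"] by simp
  next
    case False
    then show ?thesis unfolding zz_def using that Zprop[OF inZ[of i]] Zprop[OF inZ[of 0]] K2 by auto
  qed
  have nz: "g t \<noteq> 0" if "i < K" "zz i < t" "t < zz (Suc i)" for i t
  proof
    assume gt: "g t = 0"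
    show False
    proof (cases "Suc i < K")
      case True
      then have "t \<in> Z" unfolding Z_def using that Zprop[OF inZ[of i]] Zprop[OF inZ[of "Suc i"]] gt
        unfolding zz_def by auto
      then obtain j where j: "j < K" "xs!j = t" using allZ by blast
      show False
      proof (cases "j \<le> i")
        case True then show False using le[of j i] j that unfolding zz_def by auto
      next
        case False then show False using le[of "Suc i" j] j that \<open>Suc i < K\<close> unfolding zz_def by auto
      qed
    next
      case False
      then have iK: "Suc i = K" using that by simp
      show False
      proof (cases "t < 2*pi")
        case True
        then have "t \<in> Z" unfolding Z_def using that Zprop[OF inZ[of i]] gt unfolding zz_def by auto
        then obtain j where j: "j < K" "xs!j = t" using allZ by blast
        then show False using le[of j i] that iK unfolding zz_def by auto
      next
        case False
        have "g (t - 2*pi) = 0" using per[rule_format, of "t - 2*pi"] gt by simp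
        then have "t - 2*pi \<in> Z" unfolding Z_def using False that iK Zprop[OF inZ[of 0]] K2 unfolding zz_def by auto
        then obtain j where j: "j < K" "xs!j = t - 2*pi" using allZ by blast
        then show False using le[of 0 j] that iK unfolding zz_def by auto
      qed
    qed
  qed
  define mid where "mid i = (if i < K then (zz i + zz (Suc i))/2 else (zz 0 + zz 1)/2 + 2*pi)" for i
  have midK: "mid K = mid 0 + 2*pi" unfolding mid_def using K2 by simp
  have midin: "zz i < mid i \<and> mid i < zz (Suc i)" if "i < K" for i
    using zzmono[OF that] that unfolding mid_def by simp
  have gmid: "g (mid i) \<noteq> 0" if "i < K" for i using nz[OF that] midin[OF that] by blast
  have gmidK: "g (mid K) = g (mid 0)" using midK per by simp
  have sgn: "g (mid i) * g (mid (Suc i)) < 0" if "i < K" for i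
  proof (cases "Suc i < K")
    case True
    show ?thesis
    proof (rule sign_change[OF _ _ d])
      show "mid i < zz (Suc i)" "zz (Suc i) < mid (Suc i)" using midin that True by auto
      show "g (zz (Suc i)) = 0" using zz0 True by simp
      then show "g' (zz (Suc i)) \<noteq> 0" using nd by blast
      show "\<forall>t. mid i \<le> t \<and> t \<le> mid (Suc i) \<and> t \<noteq> zz (Suc i) \<longrightarrow> g t \<noteq> 0"
      proof (intro allI impI)
        fix t assume t: "mid i \<le> t \<and> t \<le> mid (Suc i) \<and> t \<noteq> zz (Suc i)"
        show "g t \<noteq> 0"
        proof (cases "t < zz (Suc i)")
          case True then show ?thesis using nz[OF that, of t] midin[OF that] t by auto
        next
          case False then show ?thesis using nz[OF \<open>Suc i < K\<close>, of t] midin[OF \<open>Suc i < K\<close>] t by auto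
        qed
      qed
    qed
  next
    case False
    then have iK: "Suc i = K" using that by simp
    show ?thesis
    proof (rule sign_change[OF _ _ d])
      show "mid i < zz (Suc i)" using midin that by auto
      show "zz (Suc i) < mid (Suc i)" using iK zzK midK midin[of 0] K2 by auto
      show "g (zz (Suc i)) = 0" using zz0 iK by simp
      then show "g' (zz (Suc i)) \<noteq> 0" using nd by blast
      show "\<forall>t. mid i \<le> t \<and> t \<le> mid (Suc i) \<and> t \<noteq> zz (Suc i) \<longrightarrow> g t \<noteq> 0"
      proof (intro allI impI)
        fix t assume t: "mid i \<le> t \<and> t \<le> mid (Suc i) \<and> t \<noteq> zz (Suc i)"
        show "g t \<noteq> 0"
        proof (cases "t < zz (Suc i)")
          case True then show ?thesis using nz[OF that, of t] midin[OF that] t by auto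
        next
          case False
          then have "zz 0 < t - 2*pi" "t - 2*pi < zz 1"
            using t iK zzK midK midin[of 0] K2 by auto
          then have "g (t - 2*pi) \<noteq> 0" using nz[of 0 "t - 2*pi"] K2 by auto
          then show ?thesis using per[rule_format, of "t - 2*pi"] by simp
        qed
      qed
    qed
  qed
  define \<sigma> where "\<sigma> = g (mid 0)"
  have s0: "\<sigma> \<noteq> 0" unfolding \<sigma>_def using gmid K2 by simp
  have alts: "\<sigma> * (-1)^i * g (mid i) > 0" if "i \<le> K" for i
    using that
  proof (induction i)
    case 0 then show ?case using s0 unfolding \<sigma>_def by (simp add: not_square_less_zero less_le)
  next
    case (Suc i)
    then have a: "(\<sigma> * (-1)^i) * g (mid i) > 0" by simp
    have "g (mid i) * g (mid (Suc i)) < 0" using sgn Suc.prems by simp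
    then have "(\<sigma> * (-1)^i) * g (mid (Suc i)) < 0" using sgn_helper[OF a] by blast
    then show ?case by simp
  qed
  have "\<sigma> * (-1)^K * \<sigma> > 0" using alts[of K] gmidK unfolding \<sigma>_def by simp
  then have "(-1::real)^K > 0" using s0
    by (metis mult.commute mult.left_commute zero_less_mult_iff not_square_less_zero less_le)
  then have evK: "even K" by (cases "even K") auto
  define m where "m = K div 2"
  have Km: "K = 2*m" unfolding m_def using evK by simp
  have "m \<ge> n" using cardZ Km unfolding K_def Z_def by simp
  moreover have "alt g m" unfolding alt_def
  proof (intro exI conjI)
    show "\<forall>i<2*m. mid i < mid (Suc i)"
    proof (intro allI impI)
      fix i assume i: "i < 2*m"
      show "mid i < mid (Suc i)"
      proof (cases "Suc i < K")
        case True then show ?thesis using midin[of i] midin[of "Suc i"] i Km by auto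
      next
        case False
        then have "Suc i = K" using i Km by simp
        then show ?thesis using midin[of i] midin[of 0] zzK midK i Km by auto
      qed
    qed
    show "mid (2*m) = mid 0 + 2*pi" using midK Km by simp
    show "\<forall>i\<le>2*m. \<sigma> * (-1)^i * g (mid i) > 0" using alts Km by simp
  qed
  ultimately show ?thesis by blast
qed



lemma per_deriv:
  assumes "\<forall>t. F (t + c) = F t"
  shows "\<forall>t. deriv F (t + c) = deriv F t"
proof
  fix t
  have e: "(\<lambda>s. F (s + c)) = F" using assms by simp
  have "deriv F t = deriv (\<lambda>s. F (s + c)) t" by (simp only: e)
  also have "\<dots> = deriv F (t + c)" unfolding deriv_def using DERIV_shift[of F _ t c] by simp
  finally show "deriv F (t + c) = deriv F t" by simp
qed

lemma at_least_mono: "at_least m A \<Longrightarrow> n \<le> m \<Longrightarrow> at_least n A"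
  unfolding at_least_def
  by (metis obtain_subset_with_card_n order.trans)

lemma main_all:
  fixes f :: "real \<Rightarrow> real" and n :: nat
  assumes "n \<ge> 1"
    and "smooth_real f"
    and "\<forall>t. f (t + 2 * pi) = f t"
    and "at_least (2 * n) {t \<in> {0..<2 * pi}. is_local_extremum f t}"
    and "\<forall>t. deriv f t = 0 \<longrightarrow> deriv (deriv f) t \<noteq> 0"
    and v: "y\<^sup>2 - 4 * x * z > 0"
  shows "at_least n {t \<in> {0..<2 * pi}.
             is_local_max (\<lambda>s. x * f s + y * deriv f s + z * deriv (deriv f) s) t}"
proof -
  have sm: "(deriv ^^ k) f differentiable (at t)" for k t using assms(2) unfolding smooth_real_def by blast
  have D0: "(f has_real_derivative deriv f t) (at t)" for t
    using sm[of 0 t] by (simp add: DERIV_deriv_iff_real_differentiable)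
  have D1: "(deriv f has_real_derivative deriv (deriv f) t) (at t)" for t
    using sm[of 1 t] by (simp add: DERIV_deriv_iff_real_differentiable)
  have D2: "(deriv (deriv f) has_real_derivative deriv (deriv (deriv f)) t) (at t)" for t
    using sm[of 2 t] by (simp add: DERIV_deriv_iff_real_differentiable numeral_2_eq_2)
  have P0: "\<forall>t. f (t + 2*pi) = f t" using assms(3) by simp
  have P1: "\<forall>t. deriv f (t + 2*pi) = deriv f t" using per_deriv[OF P0] .
  have P2: "\<forall>t. deriv (deriv f) (t + 2*pi) = deriv (deriv f) t" using per_deriv[OF P1] .
  have P3: "\<forall>t. deriv (deriv (deriv f)) (t + 2*pi) = deriv (deriv (deriv f)) t" using per_deriv[OF P2] .
  define Z where "Z = {t \<in> {0..<2*pi}. deriv f t = 0}"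
  have finZ: "finite Z" unfolding Z_def
    using zeros_finite[of "deriv f" "deriv (deriv f)", OF allI[OF D1] assms(5)] .
  have sub: "{t \<in> {0..<2 * pi}. is_local_extremum f t} \<subseteq> Z"
  proof
    fix t assume t: "t \<in> {t \<in> {0..<2 * pi}. is_local_extremum f t}"
    have "deriv f t = 0"
    proof (cases "is_local_max f t")
      case True
      then obtain e where "e > 0" "\<forall>s. \<bar>s - t\<bar> < e \<longrightarrow> f s \<le> f t" unfolding is_local_max_def by blast
      then show ?thesis using DERIV_local_max[OF D0[of t], of e] by (metis abs_minus_commute)
    next
      case False
      then have "is_local_min f t" using t unfolding is_local_extremum_def by blast
      then obtain e where "e > 0" "\<forall>s. \<bar>s - t\<bar> < e \<longrightarrow> f t \<le> f s" unfolding is_local_min_def by blast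
      then show ?thesis using DERIV_local_min[OF D0[of t], of e] by (metis abs_minus_commute)
    qed
    then show "t \<in> Z" using t unfolding Z_def by simp
  qed
  obtain B where B: "B \<subseteq> {t \<in> {0..<2 * pi}. is_local_extremum f t}" "finite B" "card B = 2*n"
    using assms(4) unfolding at_least_def by blast
  have "card B \<le> card Z" by (rule card_mono[OF finZ]) (use B(1) sub in blast)
  then have "card Z \<ge> 2*n" using B(3) by simp
  then obtain m where m: "m \<ge> n" "alt (deriv f) m"
    using alt_init[of "deriv f" "deriv (deriv f)" n, OF allI[OF D1] P1 assms(5) _ assms(1)] unfolding Z_def by blast
  define H where "H s = x * f s + y * deriv f s + z * deriv (deriv f) s" for s
  define H' where "H' s = x * deriv f s + y * deriv (deriv f) s + z * deriv (deriv (deriv f)) s" for s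
  have DH: "\<forall>t. (H has_real_derivative H' t) (at t)"
    unfolding H_def H'_def by (intro allI derivative_eq_intros) (auto intro: D0 D1 D2)
  have PH: "\<forall>t. H (t + 2*pi) = H t" unfolding H_def using P0 P1 P2 by simp
  have "alt H' m"
  proof (cases "z = 0")
    case True
    then have y0: "y \<noteq> 0" using v by auto
    have "alt (\<lambda>t. deriv (deriv f) t - (-x/y) * deriv f t) m"
      by (rule alt_step[OF m(2) allI[OF D1] P1 P2, where a="-x/y"]) simp
    then show ?thesis
      by (rule alt_scale[OF _ y0]) (simp add: H'_def True field_simps y0)
  next
    case False
    define r where "r = sqrt (y\<^sup>2 - 4 * x * z)"
    have r2: "r^2 = y\<^sup>2 - 4 * x * z" unfolding r_def using v by simp
    define a where "a = (- y + r) / (2*z)"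
    define b where "b = (- y - r) / (2*z)"
    have ab1: "a + b = - y / z" unfolding a_def b_def using False by (simp add: field_simps)
    have e1: "a * b = ((-y+r)*(-y-r))/((2*z)*(2*z))" unfolding a_def b_def by simp
    have e2: "(-y+r)*(-y-r) = 4*x*z" using r2 by (simp add: power2_eq_square algebra_simps)
    have ab2: "a * b = x / z" unfolding e1 e2 using False by (simp add: field_simps)
    have Du: "\<forall>t. ((\<lambda>t. deriv (deriv f) t - b * deriv f t) has_real_derivative
              (deriv (deriv (deriv f)) t - b * deriv (deriv f) t)) (at t)"
      by (intro allI derivative_eq_intros) (auto intro: D1 D2)
    have "alt (\<lambda>t. deriv (deriv f) t - b * deriv f t) m"
      by (rule alt_step[OF m(2) allI[OF D1] P1 P2, where a=b]) simp
    then have "alt (\<lambda>t. (deriv (deriv (deriv f)) t - b * deriv (deriv f) t) - a * (deriv (deriv f) t - b * deriv f t)) m"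
      by (rule alt_step[OF _ Du, where a=a]) (simp_all add: P1 P2 P3)
    then show ?thesis
    proof (rule alt_scale[OF _ False], intro allI)
      fix t
      have "z * ((deriv (deriv (deriv f)) t - b * deriv (deriv f) t) - a * (deriv (deriv f) t - b * deriv f t))
        = z * deriv (deriv (deriv f)) t - z * (a + b) * deriv (deriv f) t + z * (a * b) * deriv f t"
        by (simp add: algebra_simps)
      also have "\<dots> = H' t" unfolding ab1 ab2 H'_def using False by (simp add: field_simps)
      finally show "H' t = z * ((deriv (deriv (deriv f)) t - b * deriv (deriv f) t) - a * (deriv (deriv f) t - b * deriv f t))" by simp
    qed
  qed
  then have "at_least m {t \<in> {0..<2*pi}. is_local_max H t}" using alt_final DH PH by blast
  then show ?thesis using at_least_mono[OF _ m(1)] unfolding H_def by simp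
qed


theorem lemma4p1:
  fixes f :: "real \<Rightarrow> real" and n :: nat
  assumes "n \<ge> 1"
    and "smooth_real f"
    and "\<forall>t. f (t + 2 * pi) = f t"
    and "at_least (2 * n) {t \<in> {0..<2 * pi}. is_local_extremum f t}"
    and "\<forall>t. deriv f t = 0 \<longrightarrow> deriv (deriv f) t \<noteq> 0"
  shows "ae_sphere2 (\<lambda>(x, y, z). y\<^sup>2 - 4 * x * z > 0 \<longrightarrow>
           at_least n {t \<in> {0..<2 * pi}.
             is_local_max (\<lambda>s. x * f s + y * deriv f s + z * deriv (deriv f) s) t})"
proof -
  have E: "{v \<in> sphere2. \<not> (\<lambda>(x, y, z). y\<^sup>2 - 4 * x * z > 0 \<longrightarrow>
           at_least n {t \<in> {0..<2 * pi}.
             is_local_max (\<lambda>s. x * f s + y * deriv f s + z * deriv (deriv f) s) t}) v} = {}"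
    using main_all[OF assms] by auto
  have "sphere_cone {} = {}" unfolding sphere_cone_def by simp
  then show ?thesis unfolding ae_sphere2_def E by simp
qed

end
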